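(* Let $v$ be the linear classifier defined by $\vec w\in\mathbb{R}^n$ and $q\in\mathbb{R}$, and let $i\neq j$. If $w_i\ge w_j>0$, then $\mathrm{Vol}(\mathit{Piv}_j)\le\mathrm{Vol}(\mathit{Piv}_i)$.
   Context: The linear classifier defined by $\vec w$ and $q$ is $v:[0,1]^n\to\{0,1\}$, $v(\vec x)=1$ iff $\vec x\cdot\vec w\ge q$. For $\vec x\in[0,1]^n$, $b\in[0,1]$, $(\vec x_{-k},b)$ is $\vec x$ with $k$-th coordinate replaced by $b$. $\mathit{Piv}_k=\{(\vec x,b)\in[0,1]^{n+1}: v(\vec x)=0,\ v(\vec x_{-k},b)=1\}$, and $\mathrm{Vol}$ is Lebesgue measure on $\mathbb{R}^{n+1}$. *)

theory Defs
  imports "HOL-Analysis.Analysis"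
begin

definition lin_clf :: "real^'n \<Rightarrow> real \<Rightarrow> real^'n \<Rightarrow> bool" where
  "lin_clf w q x \<longleftrightarrow> x \<bullet> w \<ge> q"

definition repl :: "real^'n \<Rightarrow> 'n \<Rightarrow> real \<Rightarrow> real^'n" where
  "repl x k b = (\<chi> l. if l = k then b else x $ l)"

text \<open>Piv_k as a subset of [0,1]^n x [0,1] (identified with [0,1]^(n+1)).\<close>
definition Piv :: "real^'n \<Rightarrow> real \<Rightarrow> 'n \<Rightarrow> ((real^'n) \<times> real) set" where
  "Piv w q k = {(x, b). (\<forall>l. 0 \<le> x $ l \<and> x $ l \<le> 1) \<and> 0 \<le> b \<and> b \<le> 1
      \<and> \<not> lin_clf w q x \<and> lin_clf w q (repl x k b)}"

end

theory Submission imports Defs begin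

lemma inner_perm:
  fixes T :: "'a::euclidean_space \<Rightarrow> 'a"
  assumes lin: "linear T" and inv: "\<And>x. T (T x) = x" and B: "\<And>b. b\<in>Basis \<Longrightarrow> T b \<in> Basis"
    and b: "b\<in>Basis"
  shows "T x \<bullet> b = x \<bullet> T b"
proof -
  have "T x = T (\<Sum>c\<in>Basis. (x\<bullet>c) *\<^sub>R c)" by (simp add: euclidean_representation)
  also have "\<dots> = (\<Sum>c\<in>Basis. (x\<bullet>c) *\<^sub>R T c)"
    by (simp add: linear_sum[OF lin] linear_scale[OF lin])
  finally have "T x \<bullet> b = (\<Sum>c\<in>Basis. (x\<bullet>c) * (T c \<bullet> b))"
    by (simp add: inner_sum_left)
  also have "\<dots> = (\<Sum>c\<in>Basis. if c = T b then x \<bullet> c else 0)"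
  proof (rule sum.cong)
    fix c :: 'a assume c: "c \<in> Basis"
    have "T c = b \<longleftrightarrow> c = T b" using inv by metis
    then show "(x\<bullet>c) * (T c \<bullet> b) = (if c = T b then x \<bullet> c else 0)"
      using inner_Basis[OF B[OF c] b] by auto
  qed simp
  also have "\<dots> = x \<bullet> T b" using B[OF b] by simp
  finally show ?thesis .
qed

lemma lborel_perm:
  fixes T :: "'a::euclidean_space \<Rightarrow> 'a"
  assumes lin: "linear T" and inv: "\<And>x. T (T x) = x" and B: "\<And>b. b\<in>Basis \<Longrightarrow> T b \<in> Basis"
  shows "distr lborel borel T = lborel"
proof (rule lborel_eqI[symmetric])
  have meas: "T \<in> borel_measurable borel"
    using lin by (intro borel_measurable_continuous_onI linear_continuous_on linear_conv_bounded_linear[THEN iffD1]) 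
  have ip: "\<And>x b. b \<in> Basis \<Longrightarrow> T x \<bullet> b = x \<bullet> T b" using inner_perm[OF lin inv B] by blast
  have bij: "bij_betw T Basis Basis"
    by (rule bij_betwI[where g=T]) (auto simp: B inv)
  fix l u :: 'a assume le: "\<And>b. b \<in> Basis \<Longrightarrow> l \<bullet> b \<le> u \<bullet> b"
  have pre: "T -` box l u = box (T l) (T u)"
  proof -
    have "x \<in> T -` box l u \<longleftrightarrow> x \<in> box (T l) (T u)" for x
    proof
      assume "x \<in> T -` box l u"
      then have h: "\<forall>b\<in>Basis. l \<bullet> b < x \<bullet> T b \<and> x \<bullet> T b < u \<bullet> b" by (auto simp: box_def ip)
      show "x \<in> box (T l) (T u)" unfolding box_def
      proof (safe)
        fix c :: 'a assume c: "c \<in> Basis"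
        show "T l \<bullet> c < x \<bullet> c" "x \<bullet> c < T u \<bullet> c" using h[rule_format, OF B[OF c]] c by (auto simp: ip inv)
      qed
    next
      assume "x \<in> box (T l) (T u)"
      then have h: "\<forall>c\<in>Basis. l \<bullet> T c < x \<bullet> c \<and> x \<bullet> c < u \<bullet> T c" by (auto simp: box_def ip)
      show "x \<in> T -` box l u" unfolding box_def vimage_def mem_Collect_eq
      proof (safe)
        fix c :: 'a assume c: "c \<in> Basis"
        show "l \<bullet> c < T x \<bullet> c" "T x \<bullet> c < u \<bullet> c" using h[rule_format, OF B[OF c]] c by (auto simp: ip inv)
      qed
    qed
    then show ?thesis by blast
  qed
  have le2: "\<forall>b\<in>Basis. T l \<bullet> b \<le> T u \<bullet> b" using le B by (simp add: ip)
  have "(\<Prod>b\<in>Basis. (T u - T l) \<bullet> b) = (\<Prod>b\<in>Basis. (u - l) \<bullet> T b)"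
    by (rule prod.cong) (auto simp: ip inner_diff_left)
  also have "\<dots> = (\<Prod>b\<in>Basis. (u - l) \<bullet> b)"
    using prod.reindex_bij_betw[OF bij, of "\<lambda>b. (u - l) \<bullet> b"] by simp
  finally have pr: "(\<Prod>b\<in>Basis. (T u - T l) \<bullet> b) = (\<Prod>b\<in>Basis. (u - l) \<bullet> b)" .
  show "emeasure (distr lborel borel T) (box l u) = (\<Prod>b\<in>Basis. (u - l) \<bullet> b)"
    using meas le2 pr by (simp add: emeasure_distr pre emeasure_lborel_box_eq)
qed simp

lemma inner_repl: "repl x k b \<bullet> w = x \<bullet> w + (b - x$k) * w$k"
proof -
  have "repl x k b \<bullet> w = (\<Sum>l\<in>UNIV. repl x k b $ l * w $ l)" by (simp add: inner_vec_def)
  also have "\<dots> = b * w$k + (\<Sum>l\<in>UNIV-{k}. x $ l * w $ l)"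
    by (subst sum.remove[of _ k]) (auto simp: repl_def intro!: sum.cong)
  also have "x \<bullet> w = x$k * w$k + (\<Sum>l\<in>UNIV-{k}. x $ l * w $ l)"
    by (simp add: inner_vec_def sum.remove[of _ k])
  ultimately show ?thesis by (simp add: algebra_simps)
qed

definition swij :: "'n \<Rightarrow> 'n \<Rightarrow> (real^'n) \<times> real \<Rightarrow> (real^'n) \<times> real" where
  "swij i j p = ((\<chi> l. if l = i then fst p $ j else if l = j then fst p $ i else fst p $ l), snd p)"
definition swb :: "'n \<Rightarrow> (real^'n) \<times> real \<Rightarrow> (real^'n) \<times> real" where
  "swb k p = (repl (fst p) k (snd p), fst p $ k)"

lemma swij_inner: assumes "i \<noteq> j"
  shows "fst (swij i j p) \<bullet> w = fst p \<bullet> w + (fst p $ j - fst p $ i) * w$i + (fst p $ i - fst p $ j) * w$j"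
proof -
  have "fst (swij i j p) = repl (repl (fst p) i (fst p $ j)) j (fst p $ i)"
    using assms by (auto simp: swij_def repl_def vec_eq_iff)
  then show ?thesis using assms by (simp only: inner_repl) (simp add: repl_def algebra_simps)
qed

lemma borel_measurable_vec_nth'[measurable (raw)]:
  fixes f :: "'a \<Rightarrow> real^'n"
  assumes "f \<in> borel_measurable M"
  shows "(\<lambda>x. f x $ l) \<in> borel_measurable M"
proof -
  have "(\<lambda>x::real^'n. x $ l) \<in> borel_measurable borel"
    by (intro borel_measurable_continuous_onI continuous_intros)
  from measurable_compose[OF assms this] show ?thesis by simp
qed

lemma borel_measurable_fst'[measurable (raw)]:
  fixes f :: "'a \<Rightarrow> ('b::euclidean_space) \<times> ('c::euclidean_space)"
  assumes "f \<in> borel_measurable M"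
  shows "(\<lambda>x. fst (f x)) \<in> borel_measurable M" "(\<lambda>x. snd (f x)) \<in> borel_measurable M"
proof -
  have "(fst :: 'b \<times> 'c \<Rightarrow> 'b) \<in> borel_measurable borel"
    by (intro borel_measurable_continuous_onI continuous_intros)
  from measurable_compose[OF assms this] show "(\<lambda>x. fst (f x)) \<in> borel_measurable M" by simp
  have "(snd :: 'b \<times> 'c \<Rightarrow> 'c) \<in> borel_measurable borel"
    by (intro borel_measurable_continuous_onI continuous_intros)
  from measurable_compose[OF assms this] show "(\<lambda>x. snd (f x)) \<in> borel_measurable M" by simp
qed




lemma Basis_pair_vec: "(p::(real^'n)\<times>real) \<in> Basis \<longleftrightarrow> (\<exists>l. p = (axis l 1, 0)) \<or> p = (0, 1)"
  by (auto simp: Basis_prod_def Basis_vec_def)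

lemma swij_props:
  fixes i j :: "'n::finite"
  shows "linear (swij i j)" "\<And>p. swij i j (swij i j p) = p" "\<And>b. b \<in> Basis \<Longrightarrow> swij i j b \<in> Basis"
proof -
  show "linear (swij i j)"
    by (rule linearI) (auto simp: swij_def vec_eq_iff prod_eq_iff)
  show "\<And>p. swij i j (swij i j p) = p"
    by (auto simp: swij_def vec_eq_iff prod_eq_iff)
  fix b :: "(real^'n)\<times>real" assume "b \<in> Basis"
  then consider l where "b = (axis l 1, 0)" | "b = (0,1)" by (auto simp: Basis_pair_vec)
  then show "swij i j b \<in> Basis"
  proof cases
    case 1
    have "swij i j b = (axis (if l = i then j else if l = j then i else l) 1, 0)"
      using 1 by (auto simp: swij_def vec_eq_iff axis_def)
    then show ?thesis by (auto simp: Basis_pair_vec)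
  next
    case 2
    then have "swij i j b = (0, 1)" by (auto simp: swij_def vec_eq_iff)
    then show ?thesis by (auto simp: Basis_pair_vec)
  qed
qed

lemma swb_props:
  fixes k :: "'n::finite"
  shows "linear (swb k)" "\<And>p. swb k (swb k p) = p" "\<And>b. b \<in> Basis \<Longrightarrow> swb k b \<in> Basis"
proof -
  show "linear (swb k)"
    by (rule linearI) (auto simp: swb_def repl_def vec_eq_iff prod_eq_iff)
  show "\<And>p. swb k (swb k p) = p"
    by (auto simp: swb_def repl_def vec_eq_iff prod_eq_iff)
  fix b :: "(real^'n)\<times>real" assume "b \<in> Basis"
  then consider l where "b = (axis l 1, 0)" | "b = (0,1)" by (auto simp: Basis_pair_vec)
  then show "swb k b \<in> Basis"
  proof cases
    case 1
    show ?thesis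
    proof (cases "l = k")
      case True
      then have "swb k b = (0, 1)" using 1 by (auto simp: swb_def repl_def vec_eq_iff axis_def)
      then show ?thesis by (auto simp: Basis_pair_vec)
    next
      case False
      then have "swb k b = (axis l 1, 0)" using 1 by (auto simp: swb_def repl_def vec_eq_iff axis_def)
      then show ?thesis by (auto simp: Basis_pair_vec)
    qed
  next
    case 2
    then have "swb k b = (axis k 1, 0)" by (auto simp: swb_def repl_def vec_eq_iff axis_def)
    then show ?thesis by (auto simp: Basis_pair_vec)
  qed
qed

lemma pres_measure:
  fixes T :: "'a::euclidean_space \<Rightarrow> 'a"
  assumes lin: "linear T" and inv: "\<And>x. T (T x) = x" and B: "\<And>b. b\<in>Basis \<Longrightarrow> T b \<in> Basis"
    and A: "A \<in> sets borel"
  shows "emeasure lborel (T -` A) = emeasure lborel A" "T -` A \<in> sets borel"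
proof -
  have meas: "T \<in> borel_measurable borel"
    using lin by (intro borel_measurable_continuous_onI linear_continuous_on linear_conv_bounded_linear[THEN iffD1]) 
  have "emeasure lborel A = emeasure (distr lborel borel T) A" using lborel_perm[OF lin inv B] by simp
  also have "\<dots> = emeasure lborel (T -` A)" using meas A by (simp add: emeasure_distr)
  finally show "emeasure lborel (T -` A) = emeasure lborel A" by simp
  show "T -` A \<in> sets borel" using measurable_sets[OF meas A] by simp
qed


lemma repl_nth: "repl x k b $ l = (if l = k then b else x $ l)"
  by (simp add: repl_def)
lemma swij_fst_nth: "fst (swij i j p) $ l = (if l = i then fst p $ j else if l = j then fst p $ i else fst p $ l)"
  by (simp add: swij_def)
lemma swij_snd: "snd (swij i j p) = snd p"
  by (simp add: swij_def)
lemma swb_fst: "fst (swb k p) = repl (fst p) k (snd p)" and swb_snd: "snd (swb k p) = fst p $ k"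
  by (simp_all add: swb_def)

theorem mainTheorem9:
  fixes w :: "real^'n" and q :: real and i j :: 'n
  assumes "i \<noteq> j" and "w $ i \<ge> w $ j" and "w $ j > 0"
  shows "emeasure lborel (Piv w q j) \<le> emeasure lborel (Piv w q i)"
proof -
  note ij = assms(1)
  define cube where "cube = {p::(real^'n)\<times>real. (\<forall>l. 0 \<le> fst p $ l \<and> fst p $ l \<le> 1) \<and> 0 \<le> snd p \<and> snd p \<le> 1}"
  define Both where "Both k = {p \<in> cube. fst p \<bullet> w \<ge> q \<and> fst p \<bullet> w + (snd p - fst p $ k) * w$k \<ge> q}" for k
  define E where "E = {p \<in> cube. fst p \<bullet> w \<ge> q}"
  have Piv_alt: "Piv w q k = {p \<in> cube. fst p \<bullet> w < q \<and> fst p \<bullet> w + (snd p - fst p $ k) * w$k \<ge> q}" for k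
    by (auto simp: Piv_def cube_def lin_clf_def inner_repl)
  have cube_m[measurable]: "cube \<in> sets borel" unfolding cube_def by measurable
  have Both_m[measurable]: "Both k \<in> sets borel" for k unfolding Both_def cube_def by measurable
  have E_m[measurable]: "E \<in> sets borel" unfolding E_def cube_def by measurable
  have Piv_m[measurable]: "Piv w q k \<in> sets borel" for k unfolding Piv_alt cube_def by measurable
  have cube_fin: "emeasure lborel cube < \<infinity>"
  proof -
    have "cube \<subseteq> cbox (0, 0) (1, 1)"
      by (auto simp: cube_def cbox_Pair_eq mem_box_cart)
    then show ?thesis
      by (rule le_less_trans[OF emeasure_mono emeasure_lborel_cbox_finite]) simp
  qed
  have stepA: "emeasure lborel (Piv w q k) + emeasure lborel (Both k) = emeasure lborel E" for k
  proof -
    have eq: "Piv w q k \<union> Both k = swb k -` E"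
    proof -
      have key: "p \<in> swb k -` E \<longleftrightarrow> p \<in> cube \<and> fst p \<bullet> w + (snd p - fst p $ k) * w$k \<ge> q" for p
      proof -
        have "swb k p \<in> cube \<longleftrightarrow> p \<in> cube"
        proof
          assume h: "swb k p \<in> cube"
          then have h1: "\<And>l. 0 \<le> (if l = k then snd p else fst p $ l) \<and> (if l = k then snd p else fst p $ l) \<le> 1"
            and h2: "0 \<le> fst p $ k" "fst p $ k \<le> 1"
            unfolding cube_def mem_Collect_eq swb_fst swb_snd repl_nth by blast+
          show "p \<in> cube" unfolding cube_def mem_Collect_eq
          proof (intro conjI allI)
            fix l
            show "0 \<le> fst p $ l" "fst p $ l \<le> 1" using h1[of l] h2 by (cases "l = k"; simp)+
          qed (use h1[of k] in auto)
        next
          assume h: "p \<in> cube"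
          then have h1: "\<And>l. 0 \<le> fst p $ l \<and> fst p $ l \<le> 1" and h2: "0 \<le> snd p" "snd p \<le> 1"
            unfolding cube_def mem_Collect_eq by blast+
          show "swb k p \<in> cube" unfolding cube_def mem_Collect_eq swb_fst swb_snd repl_nth
            using h1 h2 by auto
        qed
        then show ?thesis by (simp add: E_def swb_fst inner_repl)
      qed
      show ?thesis by (rule set_eqI, unfold key) (auto simp: Piv_alt Both_def)
    qed
    have "emeasure lborel (Piv w q k) + emeasure lborel (Both k) = emeasure lborel (Piv w q k \<union> Both k)"
      by (rule plus_emeasure) (auto simp: Piv_alt Both_def)
    also have "\<dots> = emeasure lborel E" unfolding eq
      using pres_measure(1)[OF swb_props E_m] by simp
    finally show ?thesis .
  qed
  have stepB: "emeasure lborel (Both i) \<le> emeasure lborel (Both j)"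
  proof -
    define R1 where "R1 = {p::(real^'n)\<times>real. fst p $ j < snd p \<and> fst p $ i < snd p}"
    define R2 where "R2 = {p::(real^'n)\<times>real. \<not>(fst p $ j < snd p \<and> fst p $ i < snd p) \<and> fst p $ j \<le> fst p $ i}"
    define R3 where "R3 = {p::(real^'n)\<times>real. \<not>(fst p $ j < snd p \<and> fst p $ i < snd p) \<and> fst p $ i < fst p $ j}"
    have [measurable]: "R1 \<in> sets borel" "R2 \<in> sets borel" "R3 \<in> sets borel"
      unfolding R1_def R2_def R3_def by measurable
    define C1 where "C1 = Both i \<inter> R1"
    define D2 where "D2 = Both i \<inter> R2"
    define D3 where "D3 = Both i \<inter> R3"
    define C2 where "C2 = swb i -` (swij i j -` D2)"
    define C3 where "C3 = swij i j -` D3"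
    have mC[measurable]: "C1 \<in> sets borel" "D2 \<in> sets borel" "D3 \<in> sets borel"
      unfolding C1_def D2_def D3_def by measurable
    have D2'm: "swij i j -` D2 \<in> sets borel" by (rule pres_measure(2)[OF swij_props mC(2)])
    have mC2[measurable]: "C2 \<in> sets borel" "C3 \<in> sets borel"
      unfolding C2_def C3_def using pres_measure(2)[OF swb_props D2'm] pres_measure(2)[OF swij_props mC(3)] by blast+
    have eC2: "emeasure lborel C2 = emeasure lborel D2"
      unfolding C2_def by (simp add: pres_measure(1)[OF swb_props D2'm] pres_measure(1)[OF swij_props mC(2)])
    have eC3: "emeasure lborel C3 = emeasure lborel D3"
      unfolding C3_def by (simp add: pres_measure(1)[OF swij_props mC(3)])
    have wpos: "0 \<le> w $ j" "0 \<le> w $ i - w $ j" using assms by auto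
    have C1_sub: "p \<in> Both j \<and> fst p $ j < snd p \<and> fst p $ i < snd p" if "p \<in> C1" for p
    proof -
      obtain x b where p: "p = (x, b)" by fastforce
      from that have cp: "p \<in> cube" and h1: "x \<bullet> w \<ge> q" and r: "x$j < b" "x$i < b"
        by (auto simp: C1_def Both_def R1_def p)
      have "0 \<le> (b - x$j) * w$j" using r wpos by simp
      then show ?thesis using cp h1 r by (auto simp: Both_def p)
    qed
    have C2_sub: "p \<in> Both j \<and> snd p \<le> fst p $ j \<and> \<not>(snd p < fst p $ i \<and> fst p $ j < fst p $ i)" if "p \<in> C2" for p
    proof -
      obtain x b where p: "p = (x, b)" by fastforce
      define u where "u = swij i j (swb i p)"
      have u_nth: "\<And>l. fst u $ l = (if l = i then x$j else if l = j then b else x$l)"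
        using ij by (simp add: u_def p swij_fst_nth swb_fst repl_nth)
      have u_snd: "snd u = x$i" by (simp add: u_def p swij_snd swb_snd)
      have u_in: "fst u \<bullet> w = x \<bullet> w + (x$j - x$i)*w$i + (b - x$j)*w$j"
        using ij by (simp add: u_def p swij_inner swb_fst inner_repl repl_nth algebra_simps)
      from that have "u \<in> Both i" "u \<in> R2" by (auto simp: C2_def D2_def u_def)
      then have cu: "u \<in> cube" and h2: "fst u \<bullet> w + (snd u - fst u $ i) * w$i \<ge> q"
        and r: "\<not>(fst u $ j < snd u \<and> fst u $ i < snd u)" "fst u $ j \<le> fst u $ i"
        by (auto simp: Both_def R2_def)
      have h2': "x \<bullet> w + (b - x$j)*w$j \<ge> q" using h2 ij by (simp add: u_nth u_snd u_in algebra_simps)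
      have r': "b \<le> x$j" "\<not>(b < x$i \<and> x$j < x$i)" using r ij by (simp_all add: u_nth u_snd)
      have cube_u: "\<And>l. 0 \<le> fst u $ l \<and> fst u $ l \<le> 1" "0 \<le> snd u" "snd u \<le> 1"
        using cu unfolding cube_def by auto
      have cp: "p \<in> cube" unfolding cube_def mem_Collect_eq p fst_conv snd_conv
      proof (intro conjI allI)
        fix l
        show "0 \<le> x $ l" "x $ l \<le> 1"
          using cube_u(1)[of l] cube_u(1)[of i] cube_u(2,3) ij by (auto simp: u_nth u_snd split: if_splits)
      next
        show "0 \<le> b" "b \<le> 1" using cube_u(1)[of j] ij by (auto simp: u_nth)
      qed
      have "(b - x$j) * w$j \<le> 0" using r' wpos by (simp add: mult_nonpos_nonneg)
      then show ?thesis using cp h2' r' by (auto simp: Both_def p)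
    qed
    have C3_sub: "p \<in> Both j \<and> fst p $ j < fst p $ i \<and> snd p \<le> fst p $ i" if "p \<in> C3" for p
    proof -
      obtain x b where p: "p = (x, b)" by fastforce
      define u where "u = swij i j p"
      have u_nth: "\<And>l. fst u $ l = (if l = i then x$j else if l = j then x$i else x$l)"
        using ij by (simp add: u_def p swij_fst_nth)
      have u_snd: "snd u = b" by (simp add: u_def p swij_snd)
      have u_in: "fst u \<bullet> w = x \<bullet> w + (x$j - x$i)*w$i + (x$i - x$j)*w$j"
        using ij by (simp add: u_def p swij_inner)
      from that have "u \<in> Both i" "u \<in> R3" by (auto simp: C3_def D3_def u_def)
      then have cu: "u \<in> cube" and h1: "fst u \<bullet> w \<ge> q" and h2: "fst u \<bullet> w + (snd u - fst u $ i) * w$i \<ge> q"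
        and r: "\<not>(fst u $ j < snd u \<and> fst u $ i < snd u)" "fst u $ i < fst u $ j"
        by (auto simp: Both_def R3_def)
      have h1': "x \<bullet> w + (x$j - x$i)*w$i + (x$i - x$j)*w$j \<ge> q" using h1 by (simp add: u_in)
      have h2': "x \<bullet> w + (x$j - x$i)*w$i + (x$i - x$j)*w$j + (b - x$j)*w$i \<ge> q"
        using h2 ij by (simp add: u_nth u_snd u_in)
      have r': "x$j < x$i" "b \<le> x$i" using r ij by (auto simp: u_nth u_snd)
      have cube_u: "\<And>l. 0 \<le> fst u $ l \<and> fst u $ l \<le> 1" "0 \<le> snd u" "snd u \<le> 1"
        using cu unfolding cube_def by auto
      have cp: "p \<in> cube" unfolding cube_def mem_Collect_eq p fst_conv snd_conv
      proof (intro conjI allI)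
        fix l
        show "0 \<le> x $ l" "x $ l \<le> 1"
          using cube_u(1)[of l] cube_u(1)[of i] cube_u(1)[of j] ij by (auto simp: u_nth split: if_splits)
      next
        show "0 \<le> b" "b \<le> 1" using cube_u(2,3) by (auto simp: u_snd)
      qed
      have P1: "0 \<le> (x$i - x$j) * (w$i - w$j)" using r' wpos by simp
      have P2: "0 \<le> (x$i - b) * (w$i - w$j)" using r' wpos by simp
      have e1: "x \<bullet> w \<ge> q"
      proof -
        have "x \<bullet> w = (x \<bullet> w + (x$j - x$i)*w$i + (x$i - x$j)*w$j) + (x$i - x$j) * (w$i - w$j)"
          by (simp add: algebra_simps)
        then show ?thesis using h1' P1 by linarith
      qed
      have e2: "x \<bullet> w + (b - x$j) * w$j \<ge> q"
      proof -
        have "x \<bullet> w + (b - x$j) * w$j = (x \<bullet> w + (x$j - x$i)*w$i + (x$i - x$j)*w$j + (b - x$j)*w$i) + (x$i - b) * (w$i - w$j)"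
          by (simp add: algebra_simps)
        then show ?thesis using h2' P2 by linarith
      qed
      show ?thesis using cp e1 e2 r' by (auto simp: Both_def p)
    qed
    have "emeasure lborel (Both i) = emeasure lborel (C1 \<union> D2 \<union> D3)"
      by (rule arg_cong[where f="emeasure lborel"]) (auto simp: C1_def D2_def D3_def R1_def R2_def R3_def)
    also have "\<dots> = emeasure lborel C1 + emeasure lborel D2 + emeasure lborel D3"
      by (subst plus_emeasure[symmetric], simp, simp, force simp: D3_def R3_def C1_def R1_def D2_def R2_def)
         (subst plus_emeasure[symmetric], auto simp: C1_def R1_def D2_def R2_def)
    also have "\<dots> = emeasure lborel C1 + emeasure lborel C2 + emeasure lborel C3"
      by (simp add: eC2 eC3)
    also have "\<dots> = emeasure lborel (C1 \<union> C2 \<union> C3)"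
    proof -
      have d12: "C1 \<inter> C2 = {}" using C1_sub C2_sub by force
      have d3: "(C1 \<union> C2) \<inter> C3 = {}" using C1_sub C2_sub C3_sub by force
      show ?thesis
        by (simp add: plus_emeasure d12 d3)
    qed
    also have "\<dots> \<le> emeasure lborel (Both j)"
      by (rule emeasure_mono) (use C1_sub C2_sub C3_sub in auto)
    finally show ?thesis .
  qed
  have fin: "emeasure lborel (Both k) < \<infinity>" "emeasure lborel (Piv w q k) < \<infinity>" for k
    using cube_fin emeasure_mono[of "Both k" cube lborel] emeasure_mono[of "Piv w q k" cube lborel]
    by (auto simp: Both_def Piv_alt intro: le_less_trans)
  have "measure lborel (Piv w q j) + measure lborel (Both j) = measure lborel (Piv w q i) + measure lborel (Both i)"
  proof -
    have mB: "emeasure lborel (Both k) = ennreal (measure lborel (Both k))" for k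
      using fin(1)[of k] by (intro emeasure_eq_ennreal_measure) auto
    have mP: "emeasure lborel (Piv w q k) = ennreal (measure lborel (Piv w q k))" for k
      using fin(2)[of k] by (intro emeasure_eq_ennreal_measure) auto
    have "ennreal (measure lborel (Piv w q j) + measure lborel (Both j)) = ennreal (measure lborel (Piv w q i) + measure lborel (Both i))"
      using stepA[of i] stepA[of j] unfolding mB mP by (simp only: ennreal_plus[symmetric] measure_nonneg)
    then show ?thesis by (subst (asm) ennreal_inj) (auto intro: add_nonneg_nonneg)
  qed
  moreover have "measure lborel (Both i) \<le> measure lborel (Both j)"
    unfolding measure_def using stepB fin by (intro enn2real_mono) auto
  ultimately have "measure lborel (Piv w q j) \<le> measure lborel (Piv w q i)" by linarith
  then have "ennreal (measure lborel (Piv w q j)) \<le> ennreal (measure lborel (Piv w q i))"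
    by (rule ennreal_leI)
  moreover have "emeasure lborel (Piv w q k) = ennreal (measure lborel (Piv w q k))" for k
    using fin(2)[of k] by (intro emeasure_eq_ennreal_measure) auto
  ultimately show ?thesis by metis
qed

end
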